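(* Let $A$ be an algebra which is not $q_\omega$-compact. Then $\mathrm{pvar}(A)_\omega\neq \mathrm{qvar}(A)_\omega$, i.e. the class of finitely generated algebras in the prevariety generated by $A$ differs from the class of finitely generated algebras in the quasivariety generated by $A$. Moreover, there exists an ultrapower $B$ of $A$ that is not geometrically equivalent to $A$.
   Context: Let $\mathcal{V}=\mathrm{var}(A)$; for $n\geq1$, $X_n=\{x_1,\dots,x_n\}$ and $F_{\mathcal{V}}(X_n)$ is the relatively free algebra of $\mathcal{V}$ on $X_n$. For an algebra $D\in\mathcal{V}$ and $S\subseteq F_{\mathcal{V}}(X_n)^2$, $\mathrm{Rad}_D(S)$ is the set of all $(p,q)\in F_{\mathcal{V}}(X_n)^2$ such that every $d\in D^n$ with $p'(d)=q'(d)$ for all $(p',q')\in S$ also satisfies $p(d)=q(d)$. $A$ is $q_\omega$-compact if for every $n$, every $S\subseteq F_{\mathcal{V}}(X_n)^2$ and every $(p,q)\in\mathrm{Rad}_A(S)$ there is a finite $S_0\subseteq S$ with $(p,q)\in\mathrm{Rad}_A(S_0)$. A prevariety is a class closed under isomorphic copies, direct products and subalgebras; a quasivariety is a class axiomatized by quasi-identities (equivalently closed under isomorphic copies, subalgebras, direct products and ultraproducts). $\mathrm{pvar}(A)$ and $\mathrm{qvar}(A)$ are the smallest prevariety and quasivariety containing $A$; for a class $\mathfrak{X}$, $\mathfrak{X}_\omega$ is its subclass of finitely generated algebras. $A$ and $B$ are geometrically equivalent if $\mathrm{Rad}_A(S)=\mathrm{Rad}_B(S)$ for all $n$ and all $S\subseteq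 F_{\mathcal{V}}(X_n)^2$. *)

theory Defs
  imports Main
begin

datatype ('f,'v) trm = Var 'v | App 'f "('f,'v) trm list"

record ('f,'a) alg =
  carr :: "'a set"
  ops  :: "'f \<Rightarrow> 'a list \<Rightarrow> 'a"

definition is_alg :: "('f \<Rightarrow> nat) \<Rightarrow> ('f,'a) alg \<Rightarrow> bool" where
  "is_alg ar A \<longleftrightarrow> carr A \<noteq> {} \<and>
     (\<forall>f xs. length xs = ar f \<and> set xs \<subseteq> carr A \<longrightarrow> ops A f xs \<in> carr A)"

fun wf_trm :: "('f \<Rightarrow> nat) \<Rightarrow> nat \<Rightarrow> ('f,nat) trm \<Rightarrow> bool" where
  "wf_trm ar n (Var i) = (i < n)"
| "wf_trm ar n (App f ts) = (length ts = ar f \<and> (\<forall>t\<in>set ts. wf_trm ar n t))"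

fun eval :: "('f,'a) alg \<Rightarrow> (nat \<Rightarrow> 'a) \<Rightarrow> ('f,nat) trm \<Rightarrow> 'a" where
  "eval A d (Var i) = d i"
| "eval A d (App f ts) = ops A f (map (eval A d) ts)"

text \<open>Pairs of elements of the free algebra on X_n, represented by pairs of terms.\<close>
definition tpairs :: "('f \<Rightarrow> nat) \<Rightarrow> nat \<Rightarrow> (('f,nat) trm \<times> ('f,nat) trm) set" where
  "tpairs ar n = {(p,q). wf_trm ar n p \<and> wf_trm ar n q}"

definition Rad :: "('f \<Rightarrow> nat) \<Rightarrow> ('f,'a) alg \<Rightarrow> nat \<Rightarrow> (('f,nat) trm \<times> ('f,nat) trm) set
    \<Rightarrow> (('f,nat) trm \<times> ('f,nat) trm) set" where
  "Rad ar D n S = {(p,q) \<in> tpairs ar n.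
     \<forall>d. (\<forall>i<n. d i \<in> carr D) \<longrightarrow> (\<forall>(p',q')\<in>S. eval D d p' = eval D d q')
          \<longrightarrow> eval D d p = eval D d q}"

definition q_omega_compact :: "('f \<Rightarrow> nat) \<Rightarrow> ('f,'a) alg \<Rightarrow> bool" where
  "q_omega_compact ar A \<longleftrightarrow>
     (\<forall>n\<ge>1. \<forall>S \<subseteq> tpairs ar n. \<forall>pq \<in> Rad ar A n S.
        \<exists>S0 \<subseteq> S. finite S0 \<and> pq \<in> Rad ar A n S0)"

definition geom_equiv :: "('f \<Rightarrow> nat) \<Rightarrow> ('f,'a) alg \<Rightarrow> ('f,'b) alg \<Rightarrow> bool" where
  "geom_equiv ar A B \<longleftrightarrow> (\<forall>n\<ge>1. \<forall>S \<subseteq> tpairs ar n. Rad ar A n S = Rad ar B n S)"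

definition hom :: "('f \<Rightarrow> nat) \<Rightarrow> ('f,'a) alg \<Rightarrow> ('f,'b) alg \<Rightarrow> ('a \<Rightarrow> 'b) \<Rightarrow> bool" where
  "hom ar A B h \<longleftrightarrow> (\<forall>x\<in>carr A. h x \<in> carr B) \<and>
     (\<forall>f xs. length xs = ar f \<and> set xs \<subseteq> carr A \<longrightarrow> h (ops A f xs) = ops B f (map h xs))"

definition power_alg :: "('f,'a) alg \<Rightarrow> 'i set \<Rightarrow> ('f,'i \<Rightarrow> 'a) alg" where
  "power_alg A I = \<lparr> carr = {g. (\<forall>i\<in>I. g i \<in> carr A) \<and> (\<forall>i. i \<notin> I \<longrightarrow> g i = undefined)},
                     ops = (\<lambda>f gs i. if i \<in> I then ops A f (map (\<lambda>g. g i) gs) else undefined) \<rparr>"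

text \<open>B belongs to pvar(A) = ISP(A): B embeds into a direct power of A.  The index set is
  taken of type ('b => 'a) set, which suffices (one may always index by homomorphisms B -> A).\<close>
definition in_pvar :: "('f \<Rightarrow> nat) \<Rightarrow> ('f,'a) alg \<Rightarrow> ('f,'b) alg \<Rightarrow> bool" where
  "in_pvar ar A B \<longleftrightarrow> is_alg ar B \<and>
     (\<exists>(I :: ('b \<Rightarrow> 'a) set) e. hom ar B (power_alg A I) e \<and> inj_on e (carr B))"

type_synonym 'f qid = "(('f,nat) trm \<times> ('f,nat) trm) list \<times> (('f,nat) trm \<times> ('f,nat) trm)"

definition wf_qid :: "('f \<Rightarrow> nat) \<Rightarrow> 'f qid \<Rightarrow> bool" where
  "wf_qid ar \<phi> \<longleftrightarrow> (\<exists>n. set (fst \<phi>) \<subseteq> tpairs ar n \<and> snd \<phi> \<in> tpairs ar n)"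

definition sat_qid :: "('f,'a) alg \<Rightarrow> 'f qid \<Rightarrow> bool" where
  "sat_qid B \<phi> \<longleftrightarrow> (\<forall>d. (\<forall>i. d i \<in> carr B) \<longrightarrow>
      (\<forall>(s,t)\<in>set (fst \<phi>). eval B d s = eval B d t) \<longrightarrow>
      eval B d (fst (snd \<phi>)) = eval B d (snd (snd \<phi>)))"

definition in_qvar :: "('f \<Rightarrow> nat) \<Rightarrow> ('f,'a) alg \<Rightarrow> ('f,'b) alg \<Rightarrow> bool" where
  "in_qvar ar A B \<longleftrightarrow> is_alg ar B \<and>
     (\<forall>\<phi>. wf_qid ar \<phi> \<longrightarrow> sat_qid A \<phi> \<longrightarrow> sat_qid B \<phi>)"

definition closed_sub :: "('f \<Rightarrow> nat) \<Rightarrow> ('f,'a) alg \<Rightarrow> 'a set \<Rightarrow> bool" where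
  "closed_sub ar B C \<longleftrightarrow> C \<subseteq> carr B \<and>
     (\<forall>f xs. length xs = ar f \<and> set xs \<subseteq> C \<longrightarrow> ops B f xs \<in> C)"

definition fin_gen :: "('f \<Rightarrow> nat) \<Rightarrow> ('f,'a) alg \<Rightarrow> bool" where
  "fin_gen ar B \<longleftrightarrow> (\<exists>G. finite G \<and> G \<subseteq> carr B \<and>
     carr B = \<Inter>{C. G \<subseteq> C \<and> closed_sub ar B C})"

definition ultrafilter_on :: "'i set \<Rightarrow> 'i set set \<Rightarrow> bool" where
  "ultrafilter_on I U \<longleftrightarrow> U \<subseteq> Pow I \<and> I \<in> U \<and> {} \<notin> U \<and>
     (\<forall>X\<in>U. \<forall>Y\<in>U. X \<inter> Y \<in> U) \<and>
     (\<forall>X\<in>U. \<forall>Y. X \<subseteq> Y \<and> Y \<subseteq> I \<longrightarrow> Y \<in> U) \<and>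
     (\<forall>X. X \<subseteq> I \<longrightarrow> X \<in> U \<or> I - X \<in> U)"

definition up_class :: "('f,'a) alg \<Rightarrow> 'i set \<Rightarrow> 'i set set \<Rightarrow> ('i \<Rightarrow> 'a) \<Rightarrow> ('i \<Rightarrow> 'a) set" where
  "up_class A I U g = {h \<in> carr (power_alg A I). {i \<in> I. g i = h i} \<in> U}"

definition ultrapower :: "('f,'a) alg \<Rightarrow> 'i set \<Rightarrow> 'i set set \<Rightarrow> ('f, ('i \<Rightarrow> 'a) set) alg" where
  "ultrapower A I U = \<lparr> carr = up_class A I U ` carr (power_alg A I),
     ops = (\<lambda>f Xs. up_class A I U (ops (power_alg A I) f (map (\<lambda>X. SOME g. g \<in> X) Xs))) \<rparr>"

end

theory Submission
  imports Defs
begin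

lemma eval_closed:
  "is_alg ar A \<Longrightarrow> wf_trm ar n t \<Longrightarrow> (\<forall>i<n. d i \<in> carr A) \<Longrightarrow> eval A d t \<in> carr A"
proof (induction t)
  case (Var x) thus ?case by simp
next
  case (App f ts)
  hence "set (map (eval A d) ts) \<subseteq> carr A" "length (map (eval A d) ts) = ar f" by auto
  thus ?case using App.prems(1) unfolding is_alg_def by simp
qed

lemma Rad_mono: "S0 \<subseteq> S1 \<Longrightarrow> Rad ar A n S0 \<subseteq> Rad ar A n S1"
proof
  fix x assume S: "S0 \<subseteq> S1" and x: "x \<in> Rad ar A n S0"
  have "\<forall>(p',q')\<in>S0. eval A d p' = eval A d q'" if "\<forall>(p',q')\<in>S1. eval A d p' = eval A d q'" for d
    using that S by blast
  thus "x \<in> Rad ar A n S1" using x unfolding Rad_def by blast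
qed

lemma Rad_refl: "wf_trm ar n t \<Longrightarrow> (t,t) \<in> Rad ar A n S"
  unfolding Rad_def tpairs_def by auto

lemma Rad_sym: "(s,t) \<in> Rad ar A n S \<Longrightarrow> (t,s) \<in> Rad ar A n S"
  unfolding Rad_def tpairs_def by auto

lemma Rad_trans: "(s,t) \<in> Rad ar A n S \<Longrightarrow> (t,u) \<in> Rad ar A n S \<Longrightarrow> (s,u) \<in> Rad ar A n S"
  unfolding Rad_def tpairs_def by auto

lemma Rad_wf: "(s,t) \<in> Rad ar A n S \<Longrightarrow> wf_trm ar n s \<and> wf_trm ar n t"
  unfolding Rad_def tpairs_def by auto

lemma Rad_base: "(s,t) \<in> S \<Longrightarrow> S \<subseteq> tpairs ar n \<Longrightarrow> (s,t) \<in> Rad ar A n S"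
  unfolding Rad_def by auto

lemma Rad_cong:
  assumes "list_all2 (\<lambda>s t. (s,t) \<in> Rad ar A n S) ss ts" "length ss = ar f"
  shows "(App f ss, App f ts) \<in> Rad ar A n S"
proof -
  have len: "length ts = ar f" using assms list_all2_lengthD by fastforce
  have al: "\<forall>k<length ss. (ss!k, ts!k) \<in> Rad ar A n S" "length ss = length ts"
    using assms(1) by (auto simp: list_all2_conv_all_nth)
  have wfs: "\<forall>s\<in>set ss. wf_trm ar n s" "\<forall>t\<in>set ts. wf_trm ar n t"
    using al Rad_wf[of _ _ ar A n S] by (metis in_set_conv_nth)+
  have H: "\<forall>d. (\<forall>i<n. d i \<in> carr A) \<longrightarrow> (\<forall>(p',q')\<in>S. eval A d p' = eval A d q') \<longrightarrow> eval A d (App f ss) = eval A d (App f ts)"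
  proof (intro allI impI)
    fix d assume that: "\<forall>i<n. d i \<in> carr A" "\<forall>(p',q')\<in>S. eval A d p' = eval A d q'"
    have "map (eval A d) ss = map (eval A d) ts"
    proof (rule nth_equalityI)
      show "length (map (eval A d) ss) = length (map (eval A d) ts)" using len assms(2) by simp
      fix k assume "k < length (map (eval A d) ss)"
      hence k: "k < length ss" by simp
      hence "(ss!k, ts!k) \<in> Rad ar A n S" using assms(1) by (simp add: list_all2_conv_all_nth)
      hence "eval A d (ss!k) = eval A d (ts!k)" using that unfolding Rad_def by blast
      thus "map (eval A d) ss ! k = map (eval A d) ts ! k" using k len assms(2) by simp
    qed
    thus "eval A d (App f ss) = eval A d (App f ts)" by simp
  qed
  have "(App f ss, App f ts) \<in> tpairs ar n" using wfs len assms(2) unfolding tpairs_def by simp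
  thus ?thesis using H unfolding Rad_def by (intro CollectI) simp
qed

lemma la2_zip1: "list_all2 (\<lambda>s t. (s,t) \<in> (T::('a*'a) set)) ss ts \<Longrightarrow> set (zip ss ts) \<subseteq> T"
  by (auto simp: list_all2_iff)
lemma la2_zip2: "set (zip ss ts) \<subseteq> (T::('a*'a) set) \<Longrightarrow> length ss = length ts \<Longrightarrow> list_all2 (\<lambda>s t. (s,t) \<in> T) ss ts"
  by (auto simp: list_all2_iff)

definition theta where
  "theta ar A n S = {pq. \<exists>S0\<subseteq>S. finite S0 \<and> pq \<in> Rad ar A n S0}"

lemma theta_finite:
  assumes "finite X" "X \<subseteq> theta ar A n S"
  shows "\<exists>S0\<subseteq>S. finite S0 \<and> X \<subseteq> Rad ar A n S0"
  using assms
proof (induction X rule: finite_induct)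
  case empty thus ?case by (intro exI[of _ "{}"]) simp
next
  case (insert x X)
  have "X \<subseteq> theta ar A n S" "x \<in> theta ar A n S" using insert.prems by simp_all
  then obtain S0 where S0: "S0 \<subseteq> S" "finite S0" "X \<subseteq> Rad ar A n S0" using insert.IH by blast
  obtain S1 where S1: "S1 \<subseteq> S" "finite S1" "x \<in> Rad ar A n S1"
    using \<open>x \<in> theta ar A n S\<close> unfolding theta_def by blast
  have "X \<subseteq> Rad ar A n (S0 \<union> S1)" "x \<in> Rad ar A n (S0 \<union> S1)"
    using S0 S1 Rad_mono[of S0 "S0 \<union> S1" ar A n] Rad_mono[of S1 "S0 \<union> S1" ar A n] by blast+
  moreover have "S0 \<union> S1 \<subseteq> S" "finite (S0 \<union> S1)" using S0 S1 by simp_all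
  ultimately show ?case by (intro exI[of _ "S0 \<union> S1"]) simp
qed

lemma theta_list:
  assumes "list_all2 (\<lambda>s t. (s,t) \<in> theta ar A n S) ss ts"
  shows "\<exists>S0\<subseteq>S. finite S0 \<and> list_all2 (\<lambda>s t. (s,t) \<in> Rad ar A n S0) ss ts"
proof -
  have "set (zip ss ts) \<subseteq> theta ar A n S"
    using assms by (rule la2_zip1)
  then have "\<exists>S0\<subseteq>S. finite S0 \<and> set (zip ss ts) \<subseteq> Rad ar A n S0"
    by (rule theta_finite[OF finite_set])
  then obtain S0 where "S0 \<subseteq> S \<and> finite S0 \<and> set (zip ss ts) \<subseteq> Rad ar A n S0"
    by (rule exE)
  hence S0: "S0 \<subseteq> S" "finite S0" "set (zip ss ts) \<subseteq> Rad ar A n S0" by simp_all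
  have "list_all2 (\<lambda>s t. (s,t) \<in> Rad ar A n S0) ss ts"
    by (rule la2_zip2[OF S0(3) list_all2_lengthD[OF assms]])
  thus ?thesis using \<open>S0 \<subseteq> S\<close> \<open>finite S0\<close> by (intro exI[of _ S0]) simp
qed

lemma theta_cong:
  assumes "list_all2 (\<lambda>s t. (s,t) \<in> theta ar A n S) ss ts" "length ss = ar f"
  shows "(App f ss, App f ts) \<in> theta ar A n S"
proof -
  obtain S0 where S0: "S0 \<subseteq> S \<and> finite S0 \<and> list_all2 (\<lambda>s t. (s,t) \<in> Rad ar A n S0) ss ts"
    using theta_list[of ar A n S ss ts, OF assms(1)] by (rule exE)
  have "(App f ss, App f ts) \<in> Rad ar A n S0" by (rule Rad_cong[OF conjunct2[OF conjunct2[OF S0]] assms(2)])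
  thus ?thesis using S0 unfolding theta_def by (intro CollectI exI[of _ S0]) simp
qed

lemma theta_I: "S0 \<subseteq> S \<Longrightarrow> finite S0 \<Longrightarrow> pq \<in> Rad ar A n S0 \<Longrightarrow> pq \<in> theta ar A n S"
  unfolding theta_def by (intro CollectI exI[of _ S0]) simp
lemma theta_E: "pq \<in> theta ar A n S \<Longrightarrow> (\<And>S0. S0 \<subseteq> S \<Longrightarrow> finite S0 \<Longrightarrow> pq \<in> Rad ar A n S0 \<Longrightarrow> P) \<Longrightarrow> P"
  unfolding theta_def by auto
lemma theta_refl: "wf_trm ar n t \<Longrightarrow> (t,t) \<in> theta ar A n S"
  by (rule theta_I[of "{}"]) (simp_all add: Rad_refl)
lemma theta_sym: "(s,t) \<in> theta ar A n S \<Longrightarrow> (t,s) \<in> theta ar A n S"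
  by (erule theta_E) (erule theta_I, assumption, erule Rad_sym)
lemma theta_trans: "(s,t) \<in> theta ar A n S \<Longrightarrow> (t,u) \<in> theta ar A n S \<Longrightarrow> (s,u) \<in> theta ar A n S"
proof -
  assume a: "(s,t) \<in> theta ar A n S" "(t,u) \<in> theta ar A n S"
  obtain S0 where S0: "S0 \<subseteq> S" "finite S0" "(s,t) \<in> Rad ar A n S0" using a(1) by (rule theta_E)
  obtain S1 where S1: "S1 \<subseteq> S" "finite S1" "(t,u) \<in> Rad ar A n S1" using a(2) by (rule theta_E)
  have "(s,t) \<in> Rad ar A n (S0 \<union> S1)" using S0(3) Rad_mono[of S0 "S0 \<union> S1" ar A n] by (rule_tac subsetD) auto
  moreover have "(t,u) \<in> Rad ar A n (S0 \<union> S1)" using S1(3) Rad_mono[of S1 "S0 \<union> S1" ar A n] by (rule_tac subsetD) auto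
  ultimately have "(s,u) \<in> Rad ar A n (S0 \<union> S1)" by (rule Rad_trans)
  thus ?thesis using S0 S1 by (intro theta_I[of "S0 \<union> S1"]) simp_all
qed
lemma theta_wf: "(s,t) \<in> theta ar A n S \<Longrightarrow> wf_trm ar n s \<and> wf_trm ar n t"
  by (erule theta_E) (erule Rad_wf)

definition cls where "cls ar A n S t = {s. (s,t) \<in> theta ar A n S}"

lemma cls_eq: "wf_trm ar n s \<Longrightarrow> wf_trm ar n t \<Longrightarrow>
   cls ar A n S s = cls ar A n S t \<longleftrightarrow> (s,t) \<in> theta ar A n S"
proof
  assume "wf_trm ar n s" "cls ar A n S s = cls ar A n S t"
  hence "s \<in> cls ar A n S t" unfolding cls_def using theta_refl by blast
  thus "(s,t) \<in> theta ar A n S" unfolding cls_def by simp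
next
  assume "(s,t) \<in> theta ar A n S"
  thus "cls ar A n S s = cls ar A n S t"
    unfolding cls_def using theta_trans theta_sym by blast
qed

lemma cls_some:
  assumes "wf_trm ar n t"
  shows "(SOME u. u \<in> cls ar A n S t) \<in> cls ar A n S t"
proof -
  have "t \<in> cls ar A n S t" unfolding cls_def using theta_refl[OF assms] by simp
  thus ?thesis by (rule someI)
qed

definition Balg where
  "Balg ar A n S = \<lparr> carr = cls ar A n S ` {t. wf_trm ar n t},
     ops = (\<lambda>f Xs. cls ar A n S (App f (map (\<lambda>X. SOME t. t \<in> X) Xs))) \<rparr>"

lemma Balg_ops:
  assumes "\<forall>t\<in>set ts. wf_trm ar n t" "length ts = ar f"
  shows "ops (Balg ar A n S) f (map (cls ar A n S) ts) = cls ar A n S (App f ts)"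
proof -
  let ?us = "map (\<lambda>t. SOME u. u \<in> cls ar A n S t) ts"
  have "list_all2 (\<lambda>s t. (s,t) \<in> theta ar A n S) ?us ts"
    using assms(1) cls_some[of ar n _ A S] unfolding cls_def
    by (auto simp: list_all2_conv_all_nth)
  hence "(App f ?us, App f ts) \<in> theta ar A n S"
    using theta_cong assms(2) by fastforce
  hence "cls ar A n S (App f ?us) = cls ar A n S (App f ts)"
    unfolding cls_def using theta_trans theta_sym by blast
  thus ?thesis unfolding Balg_def by (simp add: comp_def)
qed

lemma Balg_carr: "carr (Balg ar A n S) = cls ar A n S ` {t. wf_trm ar n t}"
  unfolding Balg_def by simp

lemma cls_mem_wf: "u \<in> cls ar A n S t \<Longrightarrow> wf_trm ar n u \<and> (u,t) \<in> theta ar A n S"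
  unfolding cls_def using theta_wf[of u t ar A n S] by simp

lemma Balg_rep:
  assumes "X \<in> carr (Balg ar A n S)"
  shows "wf_trm ar n (SOME t. t \<in> X) \<and> cls ar A n S (SOME t. t \<in> X) = X"
proof -
  obtain t where t: "wf_trm ar n t" "X = cls ar A n S t" using assms unfolding Balg_carr by auto
  have m: "(SOME u. u \<in> X) \<in> cls ar A n S t" using cls_some[OF t(1)] t(2) by simp
  hence w: "wf_trm ar n (SOME u. u \<in> X)" "((SOME u. u \<in> X), t) \<in> theta ar A n S"
    using cls_mem_wf[OF m] by simp_all
  have "cls ar A n S (SOME u. u \<in> X) = cls ar A n S t" by (rule iffD2[OF cls_eq[OF w(1) t(1)] w(2)])
  thus ?thesis using w t by simp
qed

lemma Balg_is_alg:
  assumes "n \<ge> 1"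
  shows "is_alg ar (Balg ar A n S)"
  unfolding is_alg_def
proof (intro conjI allI impI)
  have "wf_trm ar n (Var 0)" using assms by simp
  thus "carr (Balg ar A n S) \<noteq> {}" unfolding Balg_carr by blast
next
  fix f xs assume a: "length xs = ar f \<and> set xs \<subseteq> carr (Balg ar A n S)"
  have "\<forall>X\<in>set xs. wf_trm ar n (SOME t. t \<in> X)" using a Balg_rep[of _ ar A n S] by auto
  hence "wf_trm ar n (App f (map (\<lambda>X. SOME t. t \<in> X) xs))" using a by simp
  thus "ops (Balg ar A n S) f xs \<in> carr (Balg ar A n S)" unfolding Balg_carr
    by (simp add: Balg_def)
qed

fun sub :: "(nat \<Rightarrow> ('f,nat) trm) \<Rightarrow> ('f,nat) trm \<Rightarrow> ('f,nat) trm" where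
  "sub \<sigma> (Var i) = \<sigma> i"
| "sub \<sigma> (App f ts) = App f (map (sub \<sigma>) ts)"

lemma sub_wf: "wf_trm ar m t \<Longrightarrow> (\<forall>i. wf_trm ar n (\<sigma> i)) \<Longrightarrow> wf_trm ar n (sub \<sigma> t)"
  by (induction t) auto

lemma eval_sub: "eval A a (sub \<sigma> t) = eval A (\<lambda>i. eval A a (\<sigma> i)) t"
proof (induction t)
  case (App f ts)
  have "map (\<lambda>x. eval A a (sub \<sigma> x)) ts = map (eval A (\<lambda>i. eval A a (\<sigma> i))) ts"
    using App by (intro map_cong) simp_all
  hence "ops A f (map (\<lambda>x. eval A a (sub \<sigma> x)) ts) = ops A f (map (eval A (\<lambda>i. eval A a (\<sigma> i))) ts)"
    by (rule arg_cong)
  thus ?case by (simp add: comp_def)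
qed simp

lemma eval_Balg:
  assumes "\<forall>i. wf_trm ar n (\<sigma> i)"
  shows "wf_trm ar m t \<Longrightarrow> eval (Balg ar A n S) (\<lambda>i. cls ar A n S (\<sigma> i)) t = cls ar A n S (sub \<sigma> t)"
proof (induction t)
  case (Var x) thus ?case by simp
next
  case (App f ts)
  have ih: "map (eval (Balg ar A n S) (\<lambda>i. cls ar A n S (\<sigma> i))) ts = map (cls ar A n S) (map (sub \<sigma>) ts)"
    using App by simp
  have w: "\<forall>t\<in>set (map (sub \<sigma>) ts). wf_trm ar n t" using App.prems sub_wf[of ar m _ n \<sigma>] assms by auto
  have l: "length (map (sub \<sigma>) ts) = ar f" using App.prems by simp
  show ?case unfolding eval.simps(2) sub.simps(2) ih by (rule Balg_ops[OF w l])
qed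

lemma Balg_fin_gen:
  assumes "n \<ge> 1"
  shows "fin_gen ar (Balg ar A n S)"
proof -
  let ?B = "Balg ar A n S"
  let ?G = "(\<lambda>i. cls ar A n S (Var i)) ` {..<n}"
  have G: "finite ?G" "?G \<subseteq> carr ?B" unfolding Balg_carr by auto
  have "cls ar A n S t \<in> C" if "?G \<subseteq> C" "closed_sub ar ?B C" "wf_trm ar n t" for t C
    using that(3)
  proof (induction t)
    case (Var x) thus ?case using that(1) by auto
  next
    case (App f ts)
    have "set (map (cls ar A n S) ts) \<subseteq> C" using App by auto
    moreover have "length (map (cls ar A n S) ts) = ar f" using App by simp
    ultimately have "ops ?B f (map (cls ar A n S) ts) \<in> C" using that(2) unfolding closed_sub_def by blast
    thus ?case using Balg_ops[of ts ar n f A S] App.prems by simp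
  qed
  hence "carr ?B \<subseteq> \<Inter>{C. ?G \<subseteq> C \<and> closed_sub ar ?B C}" unfolding Balg_carr by auto
  moreover have "closed_sub ar ?B (carr ?B)" using Balg_is_alg[OF assms, of ar A S] unfolding closed_sub_def is_alg_def by simp
  hence "\<Inter>{C. ?G \<subseteq> C \<and> closed_sub ar ?B C} \<subseteq> carr ?B" using G by (intro Inter_lower) simp
  ultimately show ?thesis unfolding fin_gen_def using G by (intro exI[of _ ?G]) auto
qed


lemma Rad_D: "(p,q) \<in> Rad ar A n S \<Longrightarrow> \<forall>i<n. d i \<in> carr A \<Longrightarrow>
   (\<forall>(p',q')\<in>S. eval A d p' = eval A d q') \<Longrightarrow> eval A d p = eval A d q"
  unfolding Rad_def by auto

lemma Rad_I: "(p,q) \<in> tpairs ar n \<Longrightarrow> (\<And>d. \<forall>i<n. d i \<in> carr A \<Longrightarrow>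
   (\<forall>(p',q')\<in>S. eval A d p' = eval A d q') \<Longrightarrow> eval A d p = eval A d q) \<Longrightarrow> (p,q) \<in> Rad ar A n S"
  unfolding Rad_def by auto

lemma Balg_not_pvar:
  fixes A :: "('f,'a) alg" and ar :: "'f \<Rightarrow> nat"
  assumes S: "S \<subseteq> tpairs ar n" and pq: "(p,q) \<in> Rad ar A n S" and np: "(p,q) \<notin> theta ar A n S"
  shows "\<not> in_pvar ar A (Balg ar A n S)"
proof
  let ?B = "Balg ar A n S"
  let ?c = "cls ar A n S"
  assume "in_pvar ar A (Balg ar A n S)"
  then obtain I :: "(('f,nat) trm set \<Rightarrow> 'a) set" and e where h: "hom ar ?B (power_alg A I) e" and inj: "inj_on e (carr ?B)"
    unfolding in_pvar_def by blast
  have ecar: "e (?c t) \<in> carr (power_alg A I)" if "wf_trm ar n t" for t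
    using h that unfolding hom_def Balg_carr by auto
  have key: "e (?c t) j = eval A (\<lambda>i. e (?c (Var i)) j) t" if j: "j \<in> I" and "wf_trm ar n t" for j t
    using that(2)
  proof (induction t)
    case (Var x) show ?case by simp
  next
    case (App f ts)
    have cl: "set (map ?c ts) \<subseteq> carr ?B" "length (map ?c ts) = ar f"
      using App.prems unfolding Balg_carr by auto
    have "e (?c (App f ts)) = e (ops ?B f (map ?c ts))" using Balg_ops[of ts ar n f A S] App.prems by simp
    also have "\<dots> = ops (power_alg A I) f (map e (map ?c ts))" using h cl unfolding hom_def by blast
    finally have "e (?c (App f ts)) j = ops A f (map (\<lambda>g. g j) (map e (map ?c ts)))"
      using j by (simp add: power_alg_def)
    also have "map (\<lambda>g. g j) (map e (map ?c ts)) = map (eval A (\<lambda>i. e (?c (Var i)) j)) ts"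
      using App by (simp add: comp_def)
    finally show ?case by simp
  qed
  have "e (?c p) j = e (?c q) j" for j
  proof (cases "j \<in> I")
    case True
    let ?a = "\<lambda>i. e (?c (Var i)) j"
    have a: "\<forall>i<n. ?a i \<in> carr A" using ecar True by (auto simp: power_alg_def)
    have "\<forall>(s,t)\<in>S. eval A ?a s = eval A ?a t"
    proof (intro ballI, clarify)
      fix s t assume st: "(s,t) \<in> S"
      hence w: "wf_trm ar n s" "wf_trm ar n t" using S unfolding tpairs_def by auto
      have "{(s,t)} \<subseteq> tpairs ar n" using st S by auto
      hence "(s,t) \<in> Rad ar A n {(s,t)}" by (intro Rad_base) simp_all
      hence "(s,t) \<in> theta ar A n S" using st by (intro theta_I[of "{(s,t)}"]) simp_all
      hence "?c s = ?c t" by (rule iffD2[OF cls_eq[OF w]])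
      thus "eval A ?a s = eval A ?a t" using key[OF True w(1)] key[OF True w(2)] by simp
    qed
    hence "eval A ?a p = eval A ?a q" using Rad_D[OF pq a] by simp
    moreover have "wf_trm ar n p" "wf_trm ar n q" using Rad_wf[OF pq] by simp_all
    ultimately show ?thesis using key[OF True] by simp
  next
    case False
    have "wf_trm ar n p" "wf_trm ar n q" using Rad_wf[OF pq] by simp_all
    thus ?thesis using ecar False by (simp add: power_alg_def)
  qed
  hence "e (?c p) = e (?c q)" by (rule ext)
  moreover have wpq: "wf_trm ar n p" "wf_trm ar n q" using Rad_wf[OF pq] by simp_all
  moreover have "?c p \<in> carr ?B" "?c q \<in> carr ?B" using wpq unfolding Balg_carr by auto
  ultimately have "?c p = ?c q" using inj unfolding inj_on_def by blast
  hence "(p,q) \<in> theta ar A n S" by (rule iffD1[OF cls_eq[OF wpq]])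
  thus False using np by simp
qed


lemma Balg_qvar:
  assumes A: "is_alg ar A" and n: "n \<ge> 1"
  shows "in_qvar ar A (Balg ar A n S)"
  unfolding in_qvar_def
proof (intro conjI allI impI)
  let ?B = "Balg ar A n S"
  let ?c = "cls ar A n S"
  show "is_alg ar ?B" by (rule Balg_is_alg[OF n])
  fix \<phi> :: "'a qid" assume wf: "wf_qid ar \<phi>" and sA: "sat_qid A \<phi>"
  obtain m where m: "set (fst \<phi>) \<subseteq> tpairs ar m" "snd \<phi> \<in> tpairs ar m"
    using wf unfolding wf_qid_def by blast
  show "sat_qid ?B \<phi>" unfolding sat_qid_def
  proof (intro allI impI)
    fix d assume d: "\<forall>i. d i \<in> carr ?B"
      and hyp: "\<forall>(s,t)\<in>set (fst \<phi>). eval ?B d s = eval ?B d t"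
    define \<sigma> where "\<sigma> i = (SOME t. t \<in> d i)" for i
    have \<sigma>w: "\<forall>i. wf_trm ar n (\<sigma> i)" using d Balg_rep[of _ ar A n S] unfolding \<sigma>_def by blast
    have d\<sigma>: "d = (\<lambda>i. ?c (\<sigma> i))" using d Balg_rep[of _ ar A n S] unfolding \<sigma>_def by auto
    have ev: "eval ?B d t = ?c (sub \<sigma> t)" if "wf_trm ar m t" for t
      unfolding d\<sigma> using eval_Balg[OF \<sigma>w that] .
    let ?f = "\<lambda>x. (sub \<sigma> (fst x), sub \<sigma> (snd x))"
    have X: "?f ` set (fst \<phi>) \<subseteq> theta ar A n S"
    proof
      fix y assume "y \<in> ?f ` set (fst \<phi>)"
      then obtain s t where st: "(s,t) \<in> set (fst \<phi>)" "y = (sub \<sigma> s, sub \<sigma> t)" by auto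
      have w: "wf_trm ar m s" "wf_trm ar m t" using st m unfolding tpairs_def by auto
      have w': "wf_trm ar n (sub \<sigma> s)" "wf_trm ar n (sub \<sigma> t)" using sub_wf[OF _ \<sigma>w] w by auto
      have "eval ?B d s = eval ?B d t" using hyp st by auto
      hence "?c (sub \<sigma> s) = ?c (sub \<sigma> t)" using ev[OF w(1)] ev[OF w(2)] by simp
      hence "(sub \<sigma> s, sub \<sigma> t) \<in> theta ar A n S" by (rule iffD1[OF cls_eq[OF w']])
      thus "y \<in> theta ar A n S" using st by simp
    qed
    have "\<exists>S0\<subseteq>S. finite S0 \<and> ?f ` set (fst \<phi>) \<subseteq> Rad ar A n S0"
      by (rule theta_finite[OF _ X]) simp
    then obtain S0 where S0: "S0 \<subseteq> S \<and> finite S0 \<and> ?f ` set (fst \<phi>) \<subseteq> Rad ar A n S0"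
      by (rule exE)
    obtain u v where uv: "snd \<phi> = (u,v)" by (cases "snd \<phi>")
    have wuv: "wf_trm ar m u" "wf_trm ar m v" using m uv unfolding tpairs_def by auto
    have wuv': "wf_trm ar n (sub \<sigma> u)" "wf_trm ar n (sub \<sigma> v)" using sub_wf[OF _ \<sigma>w] wuv by auto
    have "(sub \<sigma> u, sub \<sigma> v) \<in> Rad ar A n S0"
    proof (rule Rad_I)
      show "(sub \<sigma> u, sub \<sigma> v) \<in> tpairs ar n" using wuv' unfolding tpairs_def by simp
    next
      fix a assume a: "\<forall>i<n. a i \<in> carr A" and aS: "\<forall>(p',q')\<in>S0. eval A a p' = eval A a q'"
      define d' where "d' i = eval A a (\<sigma> i)" for i
      have d': "\<forall>i. d' i \<in> carr A" unfolding d'_def using eval_closed[OF A _ a] \<sigma>w by blast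
      have "\<forall>(s,t)\<in>set (fst \<phi>). eval A d' s = eval A d' t"
      proof (intro ballI, clarify)
        fix s t assume st: "(s,t) \<in> set (fst \<phi>)"
        have "(sub \<sigma> s, sub \<sigma> t) \<in> Rad ar A n S0" using S0 st by force
        hence "eval A a (sub \<sigma> s) = eval A a (sub \<sigma> t)" using Rad_D[OF _ a aS] by simp
        thus "eval A d' s = eval A d' t" unfolding d'_def eval_sub .
      qed
      hence "eval A d' (fst (snd \<phi>)) = eval A d' (snd (snd \<phi>))"
        using sA d' unfolding sat_qid_def by blast
      thus "eval A a (sub \<sigma> u) = eval A a (sub \<sigma> v)" unfolding eval_sub d'_def[symmetric] using uv by simp
    qed
    hence "(sub \<sigma> u, sub \<sigma> v) \<in> theta ar A n S" using S0 by (intro theta_I[of S0]) simp_all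
    hence "?c (sub \<sigma> u) = ?c (sub \<sigma> v)" by (rule iffD2[OF cls_eq[OF wuv']])
    thus "eval ?B d (fst (snd \<phi>)) = eval ?B d (snd (snd \<phi>))" using ev[OF wuv(1)] ev[OF wuv(2)] uv by simp
  qed
qed


definition filt :: "'i set \<Rightarrow> 'i set set \<Rightarrow> bool" where
  "filt I F \<longleftrightarrow> F \<subseteq> Pow I \<and> I \<in> F \<and> {} \<notin> F \<and>
     (\<forall>X\<in>F. \<forall>Y\<in>F. X \<inter> Y \<in> F) \<and>
     (\<forall>X\<in>F. \<forall>Y. X \<subseteq> Y \<and> Y \<subseteq> I \<longrightarrow> Y \<in> F)"

lemma ultra_exists:
  assumes F: "filt I F"
  shows "\<exists>U. ultrafilter_on I U \<and> F \<subseteq> U"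
proof -
  let ?A = "{G. filt I G \<and> F \<subseteq> G}"
  have "\<exists>M\<in>?A. \<forall>X\<in>?A. M \<subseteq> X \<longrightarrow> X = M"
  proof (rule subset_Zorn_nonempty)
    show "?A \<noteq> {}" using F by blast
  next
    fix C assume C: "C \<noteq> {}" "subset.chain ?A C"
    hence ch: "C \<subseteq> ?A" "\<forall>X\<in>C. \<forall>Y\<in>C. X \<subseteq> Y \<or> Y \<subseteq> X"
      by (auto simp: subset_chain_def)
    obtain G0 where G0: "G0 \<in> C" using C by blast
    have fC: "\<And>G. G \<in> C \<Longrightarrow> filt I G" using ch by blast
    have "filt I (\<Union>C)"
      unfolding filt_def
    proof (intro conjI ballI allI impI)
      show "\<Union>C \<subseteq> Pow I" using fC unfolding filt_def by (meson Sup_least)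
      show "I \<in> \<Union>C" using fC[OF G0] G0 unfolding filt_def by blast
      show "{} \<notin> \<Union>C" using fC unfolding filt_def by (meson UnionE)
    next
      fix X Y assume "X \<in> \<Union>C" "Y \<in> \<Union>C"
      then obtain G1 G2 where "G1 \<in> C" "G2 \<in> C" "X \<in> G1" "Y \<in> G2" by blast
      moreover have "G1 \<subseteq> G2 \<or> G2 \<subseteq> G1" using ch \<open>G1 \<in> C\<close> \<open>G2 \<in> C\<close> by blast
      ultimately show "X \<inter> Y \<in> \<Union>C"
      proof (elim disjE)
        assume "G1 \<subseteq> G2"
        hence "X \<inter> Y \<in> G2" using fC[OF \<open>G2 \<in> C\<close>] \<open>X \<in> G1\<close> \<open>Y \<in> G2\<close> unfolding filt_def by blast
        thus ?thesis using \<open>G2 \<in> C\<close> by blast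
      next
        assume "G2 \<subseteq> G1"
        hence "X \<inter> Y \<in> G1" using fC[OF \<open>G1 \<in> C\<close>] \<open>X \<in> G1\<close> \<open>Y \<in> G2\<close> unfolding filt_def by blast
        thus ?thesis using \<open>G1 \<in> C\<close> by blast
      qed
    next
      fix X Y assume "X \<in> \<Union>C" "X \<subseteq> Y \<and> Y \<subseteq> I"
      then obtain G where G: "G \<in> C" "X \<in> G" "X \<subseteq> Y \<and> Y \<subseteq> I" by blast
      hence "Y \<in> G" using fC[OF \<open>G \<in> C\<close>] unfolding filt_def by blast
      thus "Y \<in> \<Union>C" using G by blast
    qed
    moreover have "F \<subseteq> \<Union>C" using ch G0 by blast
    ultimately show "\<Union>C \<in> ?A" by blast
  qed
  then obtain M where M0: "M \<in> ?A" and mxx: "\<forall>X\<in>?A. M \<subseteq> X \<longrightarrow> X = M"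
    by (rule bexE)
  have M: "filt I M" "F \<subseteq> M" using M0 by simp_all
  have mx: "\<And>X. filt I X \<Longrightarrow> F \<subseteq> X \<Longrightarrow> M \<subseteq> X \<Longrightarrow> X = M"
    using mxx by simp
  have "X \<in> M \<or> I - X \<in> M" if XI: "X \<subseteq> I" for X
  proof (rule ccontr)
    assume nX: "\<not> (X \<in> M \<or> I - X \<in> M)"
    define M' where "M' = {Y. Y \<subseteq> I \<and> (\<exists>Z\<in>M. Z \<inter> X \<subseteq> Y)}"
    have "filt I M'"
      unfolding filt_def
    proof (intro conjI ballI allI impI)
      show "M' \<subseteq> Pow I" by (auto simp: M'_def)
      show "I \<in> M'" using M by (auto simp: M'_def filt_def)
      show "{} \<notin> M'"
      proof
        assume "{} \<in> M'"
        then obtain Z where Z: "Z \<in> M" "Z \<inter> X \<subseteq> {}" by (auto simp: M'_def)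
        hence "Z \<subseteq> I - X" using M by (auto simp: filt_def)
        hence "I - X \<in> M" using M Z by (auto simp: filt_def)
        thus False using nX by blast
      qed
    next
      fix Y1 Y2 assume "Y1 \<in> M'" "Y2 \<in> M'"
      then obtain Z1 Z2 where "Z1 \<in> M" "Z2 \<in> M" "Z1 \<inter> X \<subseteq> Y1" "Z2 \<inter> X \<subseteq> Y2" "Y1 \<subseteq> I" "Y2 \<subseteq> I"
        by (auto simp: M'_def)
      moreover hence "Z1 \<inter> Z2 \<in> M" using M unfolding filt_def by blast
      moreover have "(Z1 \<inter> Z2) \<inter> X \<subseteq> Y1 \<inter> Y2" using calculation by blast
      ultimately show "Y1 \<inter> Y2 \<in> M'" unfolding M'_def by (intro CollectI conjI bexI[of _ "Z1 \<inter> Z2"]) auto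
    next
      fix Y1 Y2 assume "Y1 \<in> M'" "Y1 \<subseteq> Y2 \<and> Y2 \<subseteq> I"
      thus "Y2 \<in> M'" unfolding M'_def by auto
    qed
    moreover have "M \<subseteq> M'" using M by (auto simp: M'_def filt_def)
    ultimately have "M' = M" using mx M by blast
    moreover have "X \<in> M'" using M XI by (auto simp: M'_def filt_def)
    ultimately show False using nX by blast
  qed
  hence "ultrafilter_on I M" using M unfolding ultrafilter_on_def filt_def by blast
  thus ?thesis using M by blast
qed


context
  fixes A :: "('f,'a) alg" and I :: "'i set" and U :: "'i set set"
  assumes U: "ultrafilter_on I U"
begin

abbreviation "P \<equiv> power_alg A I"
abbreviation "uc \<equiv> up_class A I U"

lemma U_I: "I \<in> U" and U_empty: "{} \<notin> U"
  using U unfolding ultrafilter_on_def by simp_all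

lemma U_up: "X \<in> U \<Longrightarrow> X \<subseteq> Y \<Longrightarrow> Y \<subseteq> I \<Longrightarrow> Y \<in> U"
  using U unfolding ultrafilter_on_def by blast

lemma U_int: "X \<in> U \<Longrightarrow> Y \<in> U \<Longrightarrow> X \<inter> Y \<in> U"
  using U unfolding ultrafilter_on_def by blast

lemma uc_mem: "h \<in> uc g \<longleftrightarrow> h \<in> carr P \<and> {i \<in> I. g i = h i} \<in> U"
  unfolding up_class_def by simp

lemma uc_self: "g \<in> carr P \<Longrightarrow> g \<in> uc g"
  unfolding uc_mem using U_I by simp

lemma uc_eq:
  assumes g: "g \<in> carr P" and h: "h \<in> carr P"
  shows "uc g = uc h \<longleftrightarrow> {i \<in> I. g i = h i} \<in> U"
proof
  assume "uc g = uc h"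
  hence "g \<in> uc h" using uc_self[OF g] by simp
  hence "{i \<in> I. h i = g i} \<in> U" unfolding uc_mem by simp
  moreover have "{i \<in> I. h i = g i} = {i \<in> I. g i = h i}" by auto
  ultimately show "{i \<in> I. g i = h i} \<in> U" by simp
next
  assume gh: "{i \<in> I. g i = h i} \<in> U"
  show "uc g = uc h"
  proof (intro set_eqI iffI)
    fix k assume "k \<in> uc g"
    hence k: "k \<in> carr P" "{i \<in> I. g i = k i} \<in> U" unfolding uc_mem by simp_all
    have "{i \<in> I. g i = h i} \<inter> {i \<in> I. g i = k i} \<in> U" by (rule U_int[OF gh k(2)])
    hence "{i \<in> I. h i = k i} \<in> U" by (rule U_up) auto
    thus "k \<in> uc h" unfolding uc_mem using k by simp
  next
    fix k assume "k \<in> uc h"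
    hence k: "k \<in> carr P" "{i \<in> I. h i = k i} \<in> U" unfolding uc_mem by simp_all
    have "{i \<in> I. g i = h i} \<inter> {i \<in> I. h i = k i} \<in> U" by (rule U_int[OF gh k(2)])
    hence "{i \<in> I. g i = k i} \<in> U" by (rule U_up) auto
    thus "k \<in> uc g" unfolding uc_mem using k by simp
  qed
qed

lemma U_fin: "finite K \<Longrightarrow> (\<forall>k\<in>K. F k \<in> U) \<Longrightarrow> I \<inter> (\<Inter>k\<in>K. F k) \<in> U"
proof (induction K rule: finite_induct)
  case empty thus ?case using U_I by simp
next
  case (insert x K)
  have "F x \<inter> (I \<inter> (\<Inter>k\<in>K. F k)) \<in> U" using insert by (rule_tac U_int) simp_all
  moreover have "F x \<inter> (I \<inter> (\<Inter>k\<in>K. F k)) = I \<inter> (\<Inter>k\<in>insert x K. F k)" by auto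
  ultimately show ?case by simp
qed

lemma U_list:
  assumes "length gs = length hs" "\<forall>k<length gs. {i \<in> I. (gs!k) i = (hs!k) i} \<in> U"
  shows "{i \<in> I. map (\<lambda>g. g i) gs = map (\<lambda>g. g i) hs} \<in> U"
proof -
  have "I \<inter> (\<Inter>k\<in>{..<length gs}. {i \<in> I. (gs!k) i = (hs!k) i}) \<in> U"
    using assms(2) by (intro U_fin) simp_all
  thus ?thesis
  proof (rule U_up)
    show "I \<inter> (\<Inter>k\<in>{..<length gs}. {i \<in> I. (gs!k) i = (hs!k) i}) \<subseteq> {i \<in> I. map (\<lambda>g. g i) gs = map (\<lambda>g. g i) hs}"
      using assms(1) by (auto intro!: nth_equalityI)
  qed auto
qed

lemma P_ops_carr:
  assumes A: "is_alg ar A" and gs: "set gs \<subseteq> carr P" and l: "length gs = ar f"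
  shows "ops P f gs \<in> carr P"
proof -
  have "\<forall>i\<in>I. ops A f (map (\<lambda>g. g i) gs) \<in> carr A"
  proof
    fix i assume i: "i \<in> I"
    have "set (map (\<lambda>g. g i) gs) \<subseteq> carr A" using gs i by (auto simp: power_alg_def)
    thus "ops A f (map (\<lambda>g. g i) gs) \<in> carr A" using A l unfolding is_alg_def by simp
  qed
  thus ?thesis by (simp add: power_alg_def)
qed

lemma up_eval:
  assumes A: "is_alg ar A" and G: "\<forall>i<n. G i \<in> carr P"
  shows "wf_trm ar n t \<Longrightarrow> (\<lambda>j. if j\<in>I then eval A (\<lambda>i. G i j) t else undefined) \<in> carr P \<and>
     eval (ultrapower A I U) (\<lambda>i. uc (G i)) t = uc (\<lambda>j. if j\<in>I then eval A (\<lambda>i. G i j) t else undefined)"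
proof (induction t)
  case (Var x)
  have "(\<lambda>j. if j\<in>I then eval A (\<lambda>i. G i j) (Var x) else undefined) = G x"
    using G Var by (auto simp: power_alg_def)
  thus ?case using G Var by simp
next
  case (App f ts)
  define H where "H t = (\<lambda>j. if j\<in>I then eval A (\<lambda>i. G i j) t else undefined)" for t
  let ?UP = "ultrapower A I U"
  let ?d = "\<lambda>i. uc (G i)"
  have wts: "\<forall>t\<in>set ts. wf_trm ar n t" "length ts = ar f" using App.prems by simp_all
  have ih: "H t \<in> carr P" "eval ?UP ?d t = uc (H t)" if "t \<in> set ts" for t
    using App.IH[OF that] wts that unfolding H_def by auto
  have HA: "H (App f ts) \<in> carr P"
  proof -
    have "\<forall>j\<in>I. eval A (\<lambda>i. G i j) (App f ts) \<in> carr A"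
    proof
      fix j assume "j \<in> I"
      hence "\<forall>i<n. G i j \<in> carr A" using G by (auto simp: power_alg_def)
      thus "eval A (\<lambda>i. G i j) (App f ts) \<in> carr A" by (rule eval_closed[OF A App.prems])
    qed
    thus ?thesis unfolding H_def by (simp add: power_alg_def)
  qed
  define gs where "gs = map (\<lambda>t. SOME g. g \<in> uc (H t)) ts"
  define hs where "hs = map H ts"
  have gmem: "(SOME g. g \<in> uc (H t)) \<in> uc (H t)" if "t \<in> set ts" for t
    by (rule someI[where P="\<lambda>g. g \<in> uc (H t)", OF uc_self[OF ih(1)[OF that]]])
  have lens: "length gs = length hs" "length gs = ar f" "length hs = ar f"
    unfolding gs_def hs_def using wts by simp_all
  have gsc: "set gs \<subseteq> carr P" unfolding gs_def using gmem uc_mem by auto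
  have hsc: "set hs \<subseteq> carr P" unfolding hs_def using ih by auto
  have agree: "\<forall>k<length gs. {i \<in> I. (gs!k) i = (hs!k) i} \<in> U"
  proof (intro allI impI)
    fix k assume k: "k < length gs"
    hence "ts!k \<in> set ts" unfolding gs_def by simp
    hence "{i \<in> I. H (ts!k) i = (SOME g. g \<in> uc (H (ts!k))) i} \<in> U" using gmem uc_mem by blast
    moreover have "{i \<in> I. H (ts!k) i = (SOME g. g \<in> uc (H (ts!k))) i} = {i \<in> I. (gs!k) i = (hs!k) i}"
      using k unfolding gs_def hs_def by auto
    ultimately show "{i \<in> I. (gs!k) i = (hs!k) i} \<in> U" by simp
  qed
  have "{i \<in> I. map (\<lambda>g. g i) gs = map (\<lambda>g. g i) hs} \<in> U" by (rule U_list[OF lens(1) agree])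
  hence "{i \<in> I. ops P f gs i = ops P f hs i} \<in> U"
    by (rule U_up) (auto simp: power_alg_def)
  hence e1: "uc (ops P f gs) = uc (ops P f hs)"
    using uc_eq[OF P_ops_carr[OF A gsc lens(2)] P_ops_carr[OF A hsc lens(3)]] by simp
  have e2: "ops P f hs = H (App f ts)"
  proof
    fix j show "ops P f hs j = H (App f ts) j"
    proof (cases "j \<in> I")
      case True
      have "map (\<lambda>g. g j) hs = map (eval A (\<lambda>i. G i j)) ts" unfolding hs_def H_def using True by simp
      thus ?thesis using True unfolding H_def by (simp add: power_alg_def)
    qed (simp add: power_alg_def H_def)
  qed
  have "map (eval ?UP ?d) ts = map (\<lambda>t. uc (H t)) ts" using ih(2) by (rule map_cong[OF refl])
  hence "eval ?UP ?d (App f ts) = ops ?UP f (map (\<lambda>t. uc (H t)) ts)"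
    unfolding eval.simps(2) by (rule arg_cong)
  also have "\<dots> = uc (ops P f gs)" unfolding gs_def ultrapower_def by (simp add: comp_def)
  also have "\<dots> = uc (H (App f ts))" using e1 e2 by simp
  finally show ?case using HA unfolding H_def by simp
qed

end


lemma part2:
  fixes ar :: "'f \<Rightarrow> nat" and A :: "('f,'a) alg"
  assumes A: "is_alg ar A" and S: "S \<subseteq> tpairs ar n" and pq: "(p,q) \<in> Rad ar A n S"
    and nf: "\<forall>S0\<subseteq>S. finite S0 \<longrightarrow> (p,q) \<notin> Rad ar A n S0" and n: "n \<ge> 1"
  shows "\<exists>(I :: (('f,nat) trm \<times> ('f,nat) trm) set set) U.
            ultrafilter_on I U \<and> \<not> geom_equiv ar A (ultrapower A I U)"
proof -
  define I where "I = {T. T \<subseteq> S \<and> finite T}"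
  have wpq: "wf_trm ar n p" "wf_trm ar n q" using Rad_wf[OF pq] by simp_all
  have ex: "\<exists>a. (\<forall>i<n. a i \<in> carr A) \<and> (\<forall>(s,t)\<in>T. eval A a s = eval A a t) \<and> eval A a p \<noteq> eval A a q"
    if T: "T \<in> I" for T
  proof (rule ccontr)
    assume nex: "\<not> (\<exists>a. (\<forall>i<n. a i \<in> carr A) \<and> (\<forall>(s,t)\<in>T. eval A a s = eval A a t) \<and> eval A a p \<noteq> eval A a q)"
    have "(p,q) \<in> Rad ar A n T"
    proof (rule Rad_I)
      show "(p,q) \<in> tpairs ar n" using wpq unfolding tpairs_def by simp
      fix d assume "\<forall>i<n. d i \<in> carr A" "\<forall>(p',q')\<in>T. eval A d p' = eval A d q'"
      thus "eval A d p = eval A d q" using nex by blast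
    qed
    moreover have "T \<subseteq> S" "finite T" using T unfolding I_def by simp_all
    ultimately show False using nf by simp
  qed
  hence "\<forall>T\<in>I. \<exists>a. (\<forall>i<n. a i \<in> carr A) \<and> (\<forall>(s,t)\<in>T. eval A a s = eval A a t) \<and> eval A a p \<noteq> eval A a q"
    by (intro ballI)
  from bchoice[OF this] obtain a where a: "\<forall>T\<in>I. (\<forall>i<n. a T i \<in> carr A) \<and> (\<forall>(s,t)\<in>T. eval A (a T) s = eval A (a T) t) \<and> eval A (a T) p \<noteq> eval A (a T) q"
    by (rule exE)
  define F0 where "F0 = {X. X \<subseteq> I \<and> (\<exists>T\<in>I. {j\<in>I. T \<subseteq> j} \<subseteq> X)}"
  have "filt I F0"
    unfolding filt_def
  proof (intro conjI ballI allI impI)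
    show "F0 \<subseteq> Pow I" unfolding F0_def by auto
    have "{} \<in> I" unfolding I_def by simp
    thus "I \<in> F0" unfolding F0_def by auto
    show "{} \<notin> F0"
    proof
      assume "{} \<in> F0"
      then obtain T where "T \<in> I" "{j\<in>I. T \<subseteq> j} \<subseteq> {}" unfolding F0_def by auto
      thus False by auto
    qed
  next
    fix X Y assume "X \<in> F0" "Y \<in> F0"
    then obtain T1 T2 where T: "T1 \<in> I" "T2 \<in> I" "{j\<in>I. T1 \<subseteq> j} \<subseteq> X" "{j\<in>I. T2 \<subseteq> j} \<subseteq> Y" "X \<subseteq> I" "Y \<subseteq> I"
      unfolding F0_def by auto
    have "T1 \<union> T2 \<in> I" using T unfolding I_def by auto
    moreover have "{j\<in>I. T1 \<union> T2 \<subseteq> j} \<subseteq> X \<inter> Y" using T by auto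
    ultimately show "X \<inter> Y \<in> F0" unfolding F0_def using T by (intro CollectI conjI bexI[of _ "T1 \<union> T2"]) auto
  next
    fix X Y assume "X \<in> F0" "X \<subseteq> Y \<and> Y \<subseteq> I"
    then obtain T where T: "T \<in> I" "{j\<in>I. T \<subseteq> j} \<subseteq> X" "X \<subseteq> Y" "Y \<subseteq> I" unfolding F0_def by auto
    hence "{j\<in>I. T \<subseteq> j} \<subseteq> Y" by (rule_tac subset_trans) 
    thus "Y \<in> F0" unfolding F0_def using T by (intro CollectI conjI bexI[of _ T]) auto
  qed
  then obtain U where Uu: "ultrafilter_on I U" and F0U: "F0 \<subseteq> U" using ultra_exists by blast
  let ?P = "power_alg A I"
  let ?UP = "ultrapower A I U"
  let ?uc = "up_class A I U"
  define G where "G i = (\<lambda>j. if j \<in> I then a j i else undefined)" for i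
  have Gc: "\<forall>i<n. G i \<in> carr ?P" unfolding G_def power_alg_def using a by auto
  have Gj: "(\<lambda>i. G i j) = a j" if "j \<in> I" for j unfolding G_def using that by auto
  define H where "H t = (\<lambda>j. if j\<in>I then eval A (\<lambda>i. G i j) t else undefined)" for t
  have ev: "H t \<in> carr ?P \<and> eval ?UP (\<lambda>i. ?uc (G i)) t = ?uc (H t)" if "wf_trm ar n t" for t
    unfolding H_def by (rule up_eval[OF Uu A Gc that])
  have Hj: "H t j = eval A (a j) t" if "j \<in> I" for t j unfolding H_def using that Gj by simp
  have notin: "(p,q) \<notin> Rad ar ?UP n S"
  proof
    assume pqU: "(p,q) \<in> Rad ar ?UP n S"
    have dc: "\<forall>i<n. ?uc (G i) \<in> carr ?UP" using Gc unfolding ultrapower_def by auto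
    have "\<forall>(s,t)\<in>S. eval ?UP (\<lambda>i. ?uc (G i)) s = eval ?UP (\<lambda>i. ?uc (G i)) t"
    proof (intro ballI, clarify)
      fix s t assume st: "(s,t) \<in> S"
      hence w: "wf_trm ar n s" "wf_trm ar n t" using S unfolding tpairs_def by auto
      have "{(s,t)} \<in> I" using st unfolding I_def by simp
      hence "{j\<in>I. {(s,t)} \<subseteq> j} \<in> F0" unfolding F0_def by auto
      hence "{j\<in>I. {(s,t)} \<subseteq> j} \<in> U" using F0U by auto
      moreover have "{j\<in>I. {(s,t)} \<subseteq> j} \<subseteq> {j\<in>I. H s j = H t j}"
      proof
        fix j assume "j \<in> {j\<in>I. {(s,t)} \<subseteq> j}"
        hence j: "j \<in> I" "(s,t) \<in> j" by auto
        hence "eval A (a j) s = eval A (a j) t" using a by auto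
        thus "j \<in> {j\<in>I. H s j = H t j}" using Hj j by simp
      qed
      ultimately have "{j\<in>I. H s j = H t j} \<in> U" by (rule U_up[OF Uu]) auto
      hence "?uc (H s) = ?uc (H t)" by (rule iffD2[OF uc_eq[OF Uu conjunct1[OF ev[OF w(1)]] conjunct1[OF ev[OF w(2)]]]])
      thus "eval ?UP (\<lambda>i. ?uc (G i)) s = eval ?UP (\<lambda>i. ?uc (G i)) t" using ev[OF w(1)] ev[OF w(2)] by simp
    qed
    hence "eval ?UP (\<lambda>i. ?uc (G i)) p = eval ?UP (\<lambda>i. ?uc (G i)) q" using Rad_D[OF pqU dc] by simp
    hence "?uc (H p) = ?uc (H q)" using ev[OF wpq(1)] ev[OF wpq(2)] by simp
    hence "{j\<in>I. H p j = H q j} \<in> U" by (rule iffD1[OF uc_eq[OF Uu conjunct1[OF ev[OF wpq(1)]] conjunct1[OF ev[OF wpq(2)]]]])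
    moreover have "{j\<in>I. H p j = H q j} = {}" using Hj a by auto
    ultimately show False using U_empty[OF Uu] by simp
  qed
  have "\<not> geom_equiv ar A ?UP"
  proof
    assume "geom_equiv ar A ?UP"
    hence "Rad ar A n S = Rad ar ?UP n S" using n S unfolding geom_equiv_def by blast
    thus False using pq notin by simp
  qed
  thus ?thesis using Uu by blast
qed

theorem mainTheorem4:
  fixes ar :: "'f \<Rightarrow> nat" and A :: "('f,'a) alg"
  assumes "is_alg ar A"
    and "\<not> q_omega_compact ar A"
  shows "(\<exists>B :: ('f, ('f,nat) trm set) alg.
            fin_gen ar B \<and> in_pvar ar A B \<noteq> in_qvar ar A B)
       \<and> (\<exists>(I :: (('f,nat) trm \<times> ('f,nat) trm) set set) U.
            ultrafilter_on I U \<and> \<not> geom_equiv ar A (ultrapower A I U))"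
proof -
  obtain n S pq where n: "n \<ge> 1" and S: "S \<subseteq> tpairs ar n" and pq: "pq \<in> Rad ar A n S"
    and nf: "\<forall>S0\<subseteq>S. finite S0 \<longrightarrow> pq \<notin> Rad ar A n S0"
    using assms(2) unfolding q_omega_compact_def by auto
  obtain p q where pqe: "pq = (p,q)" by (cases pq)
  have nth: "(p,q) \<notin> theta ar A n S"
  proof
    assume "(p,q) \<in> theta ar A n S"
    then obtain S0 where "S0 \<subseteq> S" "finite S0" "(p,q) \<in> Rad ar A n S0" by (rule theta_E)
    thus False using nf pqe by simp
  qed
  have "in_qvar ar A (Balg ar A n S)" by (rule Balg_qvar[OF assms(1) n])
  moreover have "\<not> in_pvar ar A (Balg ar A n S)" using Balg_not_pvar[OF S _ nth] pq pqe by simp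
  moreover have "fin_gen ar (Balg ar A n S)" by (rule Balg_fin_gen[OF n])
  ultimately have "\<exists>B :: ('f, ('f,nat) trm set) alg. fin_gen ar B \<and> in_pvar ar A B \<noteq> in_qvar ar A B"
    by (intro exI[of _ "Balg ar A n S"]) simp
  moreover have "\<exists>(I :: (('f,nat) trm \<times> ('f,nat) trm) set set) U.
            ultrafilter_on I U \<and> \<not> geom_equiv ar A (ultrapower A I U)"
    using part2[OF assms(1) S, of p q] pq nf pqe n by simp
  ultimately show ?thesis by blast
qed

end
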